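(* Let $\mathcal{Y}=\{1,\dots,C\}$ be a finite label set and let $\Delta$ denote the set of probability distributions on $\mathcal{Y}$. Let $K\ge 1$, let $\mathcal{D}_1,\dots,\mathcal{D}_K$ be pairwise disjoint measurable subsets of an input space $\mathcal{X}$, and for each $k$ let $P_k$ be a probability measure on $\mathcal{X}$ with $P_k(\mathcal{D}_k)=1$. Let $q_1,\dots,q_K\ge 0$ with $\sum_{k=1}^K q_k=1$ and $P=\sum_{k=1}^K q_kP_k$. Let $\Phi^*:\mathcal{X}\to\Delta$ be measurable, and let $\Phi(\cdot;w)$, $\Phi(\cdot;w_1),\dots,\Phi(\cdot;w_K)$ be measurable maps $\mathcal{X}\to\Delta$ (a global model with parameter $w$ and local models with parameters $w_k$). Let $\delta(p,q)=\sup_{A\subseteq\mathcal{Y}}|p(A)-q(A)|$ be the total variation distance and define $\delta^\dagger(p,q):=\delta(p,q)^2$. Then $$\int \delta^\dagger(\Phi^*(x),\Phi(x;w))\,P(dx)\le L_1'+L_2',$$ where $$L_1'=\sum_{k=1}^K q_k\int_{\mathcal{D}_k} D_{KL}(\Phi^*(x)\,\|\,\Phi(x;w_k))\,P_k(dx),\qquad L_2'=\sum_{k=1}^K q_k\int_{\mathcal{D}_k} D_{KL}(\Phi(x;w_k)\,\|\,\Phi(x;w))\,P_k(dx),$$ and $D_{KL}$ denotes the Kullback–Leibler divergence (with values in $[0,\infty]$).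
   Context: This is the federated learning setting: client $k$ holds private data $\mathcal{D}_k$ drawn from distribution $P_k$, $q_k$ is the probability that a sample comes from client $k$, and $P$ is the distribution of the whole data. $\Phi^*$ is the ground-truth map, $\Phi(\cdot;w_k)$ the local models and $\Phi(\cdot;w)$ the global model, all of the same architecture and outputting probability vectors. *)

theory Defs
  imports "HOL-Probability.Probability"
begin

definition prob_simplex :: "('y::finite \<Rightarrow> real) set" where
  "prob_simplex = {p. (\<forall>y. 0 \<le> p y) \<and> (\<Sum>y\<in>UNIV. p y) = 1}"

definition tv_dist :: "('y::finite \<Rightarrow> real) \<Rightarrow> ('y \<Rightarrow> real) \<Rightarrow> real" where
  "tv_dist p q = Max ((\<lambda>A. \<bar>(\<Sum>y\<in>A. p y) - (\<Sum>y\<in>A. q y)\<bar>) ` Pow UNIV)"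

definition tv_dagger :: "('y::finite \<Rightarrow> real) \<Rightarrow> ('y \<Rightarrow> real) \<Rightarrow> real" where
  "tv_dagger p q = (tv_dist p q)\<^sup>2"

text \<open>Kullback--Leibler divergence with values in [0,\<infinity>], conventions 0 ln(0/q) = 0,
  p ln(p/0) = \<infinity> for p > 0.\<close>
definition kl_div :: "('y::finite \<Rightarrow> real) \<Rightarrow> ('y \<Rightarrow> real) \<Rightarrow> ennreal" where
  "kl_div p q =
     (if (\<exists>y. p y > 0 \<and> q y = 0) then \<infinity>
      else ennreal (\<Sum>y\<in>UNIV. if p y = 0 then 0 else p y * ln (p y / q y)))"

end

theory Submission
  imports Defs
begin


definition phi_aux :: "real \<Rightarrow> real" where
  "phi_aux t = ln t - (t-1)*(5*t+1)/(2*t*(t+2))"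

lemma phi_aux_deriv:
  assumes "t > 0"
  shows "(phi_aux has_real_derivative ((t-1)^3/(t^2*(t+2)^2))) (at t)"
proof -
  have "(phi_aux has_real_derivative
     (1/t - ((((1*(5*t+1) + (t-1)*5))*(2*t*(t+2)) - (t-1)*(5*t+1)*(2*(t+2)+2*t)) / (2*t*(t+2))^2))) (at t)"
    unfolding phi_aux_def using assms
    by (auto intro!: derivative_eq_intros simp: power2_eq_square)
  moreover have "1/t - ((((1*(5*t+1) + (t-1)*5))*(2*t*(t+2)) - (t-1)*(5*t+1)*(2*(t+2)+2*t)) / (2*t*(t+2))^2)
      = (t-1)^3/(t^2*(t+2)^2)"
  proof -
    have "t \<noteq> 0" "t + 2 \<noteq> 0" using assms by auto
    then show ?thesis by (simp add: divide_simps) algebra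
  qed
  ultimately show ?thesis by simp
qed

lemma phi_aux_nonneg:
  assumes "t > 0" shows "phi_aux t \<ge> 0"
proof -
  have p1: "phi_aux 1 = 0" by (simp add: phi_aux_def)
  show ?thesis
  proof (cases "t \<ge> 1")
    case True
    have "phi_aux 1 \<le> phi_aux t"
      by (rule deriv_nonneg_imp_mono[of 1 t phi_aux "\<lambda>t. (t-1)^3/(t^2*(t+2)^2)"])
         (use True in \<open>auto intro!: phi_aux_deriv\<close>)
    then show ?thesis using p1 by simp
  next
    case False
    have "phi_aux 1 \<le> phi_aux t"
    proof (rule deriv_nonpos_imp_antimono[of t 1 phi_aux "\<lambda>t. (t-1)^3/(t^2*(t+2)^2)"])
      fix x assume x: "x \<in> {t..1}"
      then show "(phi_aux has_real_derivative (x-1)^3/(x^2*(x+2)^2)) (at x)"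
        using assms by (intro phi_aux_deriv) auto
      have "0 \<le> (1-x)^3" using x by simp
      moreover have "(x-1)^3 = -((1-x)^3)" by (simp add: power3_eq_cube algebra_simps)
      ultimately have "(x-1)^3 \<le> 0" by linarith
      then show "(x-1)^3/(x^2*(x+2)^2) \<le> 0" by (simp add: divide_nonpos_nonneg)
    next
      show "t \<le> 1" using False by simp
    qed
    then show ?thesis using p1 by simp
  qed
qed



lemma pt_ineq:
  fixes p q :: real
  assumes p: "p \<ge> 0" and q: "q \<ge> 0" and pq: "p > 0 \<longrightarrow> q > 0"
  shows "(if p = 0 then 0 else p * ln (p / q)) - p + q
     \<ge> 3/2 * (if p + 2*q = 0 then 0 else (p-q)^2/(p+2*q))"
proof (cases "p = 0")
  case True
  then show ?thesis using q by (cases "q = 0") (auto simp: power2_eq_square field_simps)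
next
  case False
  then have p0: "p > 0" using p by simp
  then have q0: "q > 0" using pq by simp
  define t where "t = p / q"
  have t0: "t > 0" using p0 q0 by (simp add: t_def)
  have "(t-1)*(5*t+1)/(2*t*(t+2)) \<le> ln t"
    using phi_aux_nonneg[OF t0] by (simp add: phi_aux_def)
  then have "p * ((t-1)*(5*t+1)/(2*t*(t+2))) \<le> p * ln t"
    using p0 by (intro mult_left_mono) auto
  moreover have "p * ((t-1)*(5*t+1)/(2*t*(t+2))) = (p-q)*(5*p+q)/(2*(p+2*q))"
    using p0 q0 unfolding t_def by (simp add: divide_simps)
  moreover have "(p-q)*(5*p+q)/(2*(p+2*q)) - p + q = 3/2 * ((p-q)^2/(p+2*q))"
    using p0 q0 by (simp add: field_simps power2_eq_square)
  ultimately show ?thesis using p0 q0 False by (simp add: t_def)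
qed

lemma tv_nonneg: "tv_dist p q \<ge> 0"
proof -
  have "\<bar>(\<Sum>y\<in>{}. p y) - (\<Sum>y\<in>{}. q y)\<bar> \<in> (\<lambda>A. \<bar>(\<Sum>y\<in>A. p y) - (\<Sum>y\<in>A. q y)\<bar>) ` Pow UNIV"
    by blast
  then have "\<bar>(\<Sum>y\<in>{}. p y) - (\<Sum>y\<in>{}. q y)\<bar> \<le> tv_dist p q"
    unfolding tv_dist_def by (intro Max_ge) auto
  then show ?thesis by simp
qed

lemma tv_le_l1:
  fixes p q :: "'y::finite \<Rightarrow> real"
  assumes "(\<Sum>y\<in>UNIV. p y) = (\<Sum>y\<in>UNIV. q y)"
  shows "tv_dist p q \<le> (\<Sum>y\<in>UNIV. \<bar>p y - q y\<bar>) / 2"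
  unfolding tv_dist_def
proof (rule Max.boundedI)
  fix a assume "a \<in> (\<lambda>A. \<bar>(\<Sum>y\<in>A. p y) - (\<Sum>y\<in>A. q y)\<bar>) ` Pow UNIV"
  then obtain A :: "'y set" where aA: "a = \<bar>(\<Sum>y\<in>A. p y) - (\<Sum>y\<in>A. q y)\<bar>" by blast
  define d where "d y = p y - q y" for y
  have s0: "(\<Sum>y\<in>UNIV. d y) = 0" using assms by (simp add: d_def sum_subtractf)
  have split: "(\<Sum>y\<in>UNIV. d y) = (\<Sum>y\<in>A. d y) + (\<Sum>y\<in>UNIV - A. d y)"
    using sum.Int_Diff[of UNIV d A] by simp
  have splita: "(\<Sum>y\<in>UNIV. \<bar>d y\<bar>) = (\<Sum>y\<in>A. \<bar>d y\<bar>) + (\<Sum>y\<in>UNIV - A. \<bar>d y\<bar>)"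
    using sum.Int_Diff[of UNIV "\<lambda>y. \<bar>d y\<bar>" A] by simp
  have a1: "\<bar>\<Sum>y\<in>A. d y\<bar> \<le> (\<Sum>y\<in>A. \<bar>d y\<bar>)" by (rule sum_abs)
  have a2: "\<bar>\<Sum>y\<in>UNIV - A. d y\<bar> \<le> (\<Sum>y\<in>UNIV - A. \<bar>d y\<bar>)" by (rule sum_abs)
  have "\<bar>(\<Sum>y\<in>A. p y) - (\<Sum>y\<in>A. q y)\<bar> = \<bar>\<Sum>y\<in>A. d y\<bar>" by (simp add: d_def sum_subtractf)
  then show "a \<le> (\<Sum>y\<in>UNIV. \<bar>p y - q y\<bar>) / 2"
  proof -
    have "sum d (UNIV-A) = - sum d A" using s0 split by linarith
    then have "\<bar>sum d (UNIV-A)\<bar> = \<bar>sum d A\<bar>" by simp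
    then show ?thesis using splita a1 a2 \<open>\<bar>(\<Sum>y\<in>A. p y) - (\<Sum>y\<in>A. q y)\<bar> = \<bar>\<Sum>y\<in>A. d y\<bar>\<close>
      unfolding d_def aA by linarith
  qed
qed auto

lemma tv_triangle:
  fixes p r s :: "'y::finite \<Rightarrow> real"
  shows "tv_dist p r \<le> tv_dist p s + tv_dist s r"
  unfolding tv_dist_def
proof (rule Max.boundedI)
  fix a assume "a \<in> (\<lambda>A. \<bar>(\<Sum>y\<in>A. p y) - (\<Sum>y\<in>A. r y)\<bar>) ` Pow UNIV"
  then obtain A :: "'y set" where aA: "a = \<bar>(\<Sum>y\<in>A. p y) - (\<Sum>y\<in>A. r y)\<bar>" by blast
  have "\<bar>(\<Sum>y\<in>A. p y) - (\<Sum>y\<in>A. s y)\<bar> \<le> Max ((\<lambda>A. \<bar>(\<Sum>y\<in>A. p y) - (\<Sum>y\<in>A. s y)\<bar>) ` Pow UNIV)"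
    by (intro Max_ge) auto
  moreover have "\<bar>(\<Sum>y\<in>A. s y) - (\<Sum>y\<in>A. r y)\<bar> \<le> Max ((\<lambda>A. \<bar>(\<Sum>y\<in>A. s y) - (\<Sum>y\<in>A. r y)\<bar>) ` Pow UNIV)"
    by (intro Max_ge) auto
  ultimately show "a \<le> Max ((\<lambda>A. \<bar>(\<Sum>y\<in>A. p y) - (\<Sum>y\<in>A. s y)\<bar>) ` Pow UNIV)
     + Max ((\<lambda>A. \<bar>(\<Sum>y\<in>A. s y) - (\<Sum>y\<in>A. r y)\<bar>) ` Pow UNIV)"
    unfolding aA by linarith
qed auto



lemma e_bound:
  fixes p q c :: real
  assumes "p \<ge> 0" "q \<ge> 0"
  shows "(if p + 2*q = 0 then 0 else (p-q)^2/(p+2*q)) \<ge> 2*c*\<bar>p - q\<bar> - c^2 * (p + 2*q)"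
proof (cases "p + 2*q = 0")
  case True
  then have "p = 0" "q = 0" using assms by auto
  then show ?thesis by simp
next
  case False
  then have w: "p + 2*q > 0" using assms by auto
  have "0 \<le> (\<bar>p - q\<bar> - c*(p+2*q))^2 / (p+2*q)" using w by simp
  also have "\<dots> = (p-q)^2/(p+2*q) - 2*c*\<bar>p - q\<bar> + c^2*(p+2*q)"
    using w by (simp add: field_simps power2_eq_square)
  finally show ?thesis using False by simp
qed

lemma pinsker:
  fixes p q :: "'y::finite \<Rightarrow> real"
  assumes p: "p \<in> prob_simplex" and q: "q \<in> prob_simplex" and pq: "\<forall>y. p y > 0 \<longrightarrow> q y > 0"
  shows "2 * (tv_dist p q)^2 \<le> (\<Sum>y\<in>UNIV. if p y = 0 then 0 else p y * ln (p y / q y))"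
proof -
  define T where "T y = (if p y = 0 then 0 else p y * ln (p y / q y))" for y
  define e where "e y = (if p y + 2 * q y = 0 then 0 else (p y - q y)^2/(p y + 2 * q y))" for y
  define S where "S = (\<Sum>y\<in>UNIV. \<bar>p y - q y\<bar>)"
  have p0: "\<And>y. p y \<ge> 0" and ps: "(\<Sum>y\<in>UNIV. p y) = 1" using p by (auto simp: prob_simplex_def)
  have q0: "\<And>y. q y \<ge> 0" and qs: "(\<Sum>y\<in>UNIV. q y) = 1" using q by (auto simp: prob_simplex_def)
  have pt: "T y - p y + q y \<ge> 3/2 * e y" for y
    unfolding T_def e_def by (rule pt_ineq) (use p0 q0 pq in auto)
  have "(\<Sum>y\<in>UNIV. T y - p y + q y) = (\<Sum>y\<in>UNIV. T y)"
    using ps qs by (simp add: sum.distrib sum_subtractf)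
  moreover have "(\<Sum>y\<in>UNIV. 3/2 * e y) \<le> (\<Sum>y\<in>UNIV. T y - p y + q y)"
    by (intro sum_mono pt)
  ultimately have ST: "3/2 * (\<Sum>y\<in>UNIV. e y) \<le> (\<Sum>y\<in>UNIV. T y)"
    by (simp add: sum_distrib_left)
  have "(\<Sum>y\<in>UNIV. 2*(S/3)*\<bar>p y - q y\<bar> - (S/3)^2 * (p y + 2 * q y)) \<le> (\<Sum>y\<in>UNIV. e y)"
    unfolding e_def by (intro sum_mono e_bound p0 q0)
  moreover have "(\<Sum>y\<in>UNIV. 2*(S/3)*\<bar>p y - q y\<bar> - (S/3)^2 * (p y + 2 * q y))
      = 2*(S/3)*S - (S/3)^2 * 3"
  proof -
    have A1: "(\<Sum>y\<in>UNIV. 2*(S/3)*\<bar>p y - q y\<bar>) = 2*(S/3)*S" unfolding S_def by (simp add: sum_distrib_left)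
    have w3: "(\<Sum>y\<in>UNIV. p y + 2 * q y) = 3" using ps qs by (simp add: sum.distrib sum_distrib_left[symmetric])
    have A2: "(\<Sum>y\<in>UNIV. (S/3)^2 * (p y + 2 * q y)) = (S/3)^2 * 3"
      by (subst sum_distrib_left[symmetric]) (simp add: w3)
    show ?thesis by (simp only: sum_subtractf A1 A2)
  qed
  ultimately have SE: "S^2/3 \<le> (\<Sum>y\<in>UNIV. e y)" by (simp add: power2_eq_square)
  have tv1: "tv_dist p q \<le> S/2" unfolding S_def by (rule tv_le_l1) (use ps qs in simp)
  have "(tv_dist p q)^2 \<le> (S/2)^2" by (intro power_mono tv1 tv_nonneg)
  then have "2 * (tv_dist p q)^2 \<le> 3/2 * (S^2/3)" by (simp add: power2_eq_square)
  also have "\<dots> \<le> (\<Sum>y\<in>UNIV. T y)" using SE ST by linarith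
  finally show ?thesis by (simp add: T_def)
qed

lemma kl_nonneg:
  fixes p q :: "'y::finite \<Rightarrow> real"
  assumes p: "p \<in> prob_simplex" and q: "q \<in> prob_simplex" and pq: "\<forall>y. p y > 0 \<longrightarrow> q y > 0"
  shows "0 \<le> (\<Sum>y\<in>UNIV. if p y = 0 then 0 else p y * ln (p y / q y))"
proof -
  have "0 \<le> 2 * (tv_dist p q)^2" by simp
  then show ?thesis using pinsker[OF assms] by linarith
qed

lemma pointwise:
  fixes p r s :: "'y::finite \<Rightarrow> real"
  assumes p: "p \<in> prob_simplex" and r: "r \<in> prob_simplex" and s: "s \<in> prob_simplex"
  shows "ennreal (tv_dagger p r) \<le> kl_div p s + kl_div s r"
proof (cases "(\<exists>y. p y > 0 \<and> s y = 0) \<or> (\<exists>y. s y > 0 \<and> r y = 0)")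
  case True
  then show ?thesis unfolding kl_div_def by auto
next
  case False
  have p0: "\<And>y. p y \<ge> 0" using p by (auto simp: prob_simplex_def)
  have s0: "\<And>y. s y \<ge> 0" using s by (auto simp: prob_simplex_def)
  have r0: "\<And>y. r y \<ge> 0" using r by (auto simp: prob_simplex_def)
  have ps: "\<forall>y. p y > 0 \<longrightarrow> s y > 0" using False s0 by (metis less_eq_real_def)
  have sr: "\<forall>y. s y > 0 \<longrightarrow> r y > 0" using False r0 by (metis less_eq_real_def)
  define a where "a = tv_dist p s"
  define b where "b = tv_dist s r"
  have "tv_dist p r \<le> a + b" unfolding a_def b_def by (rule tv_triangle)
  then have "(tv_dist p r)^2 \<le> (a+b)^2" by (intro power_mono tv_nonneg)
  also have "\<dots> \<le> 2*a^2 + 2*b^2"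
  proof -
    have "2*a^2 + 2*b^2 - (a+b)^2 = (a-b)^2" by (simp add: power2_eq_square algebra_simps)
    moreover have "0 \<le> (a-b)^2" by simp
    ultimately show ?thesis by linarith
  qed
  finally have "tv_dagger p r \<le> (\<Sum>y\<in>UNIV. if p y = 0 then 0 else p y * ln (p y / s y))
      + (\<Sum>y\<in>UNIV. if s y = 0 then 0 else s y * ln (s y / r y))"
    using pinsker[OF p s ps] pinsker[OF s r sr] unfolding a_def b_def tv_dagger_def by linarith
  then show ?thesis using False kl_nonneg[OF p s ps] kl_nonneg[OF s r sr]
    unfolding kl_div_def by (simp add: ennreal_plus[symmetric] del: ennreal_plus)
qed



lemma mix_integral:
  fixes u :: "'x \<Rightarrow> ennreal"
  assumes I: "finite I" and PS: "sets P = sets M" and NS: "\<And>k. k \<in> I \<Longrightarrow> sets (N k) = sets M"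
    and mix: "\<And>A. A \<in> sets M \<Longrightarrow> emeasure P A = (\<Sum>k\<in>I. c k * emeasure (N k) A)"
    and u: "u \<in> borel_measurable M"
  shows "(\<integral>\<^sup>+ x. u x \<partial>P) = (\<Sum>k\<in>I. c k * (\<integral>\<^sup>+ x. u x \<partial>N k))"
proof -
  have tP: "\<And>f. f \<in> borel_measurable M \<Longrightarrow> f \<in> (borel_measurable P :: ('x \<Rightarrow> ennreal) set)"
    using measurable_cong_sets[OF PS refl, of "borel :: ennreal measure"] by simp
  have tN: "\<And>f k. k \<in> I \<Longrightarrow> f \<in> borel_measurable M \<Longrightarrow> f \<in> (borel_measurable (N k) :: ('x \<Rightarrow> ennreal) set)"
    using measurable_cong_sets[OF NS refl, of _ "borel :: ennreal measure"] by simp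
  show ?thesis
  using u
proof (induction rule: borel_measurable_induct)
  case (cong f g)
  have sP: "space P = space M" using PS by (rule sets_eq_imp_space_eq)
  have sN: "\<And>k. k \<in> I \<Longrightarrow> space (N k) = space M" using NS by (rule sets_eq_imp_space_eq)
  have "(\<integral>\<^sup>+ x. f x \<partial>P) = (\<integral>\<^sup>+ x. g x \<partial>P)" using cong sP by (intro nn_integral_cong) auto
  moreover have "\<And>k. k \<in> I \<Longrightarrow> (\<integral>\<^sup>+ x. f x \<partial>N k) = (\<integral>\<^sup>+ x. g x \<partial>N k)"
    using cong sN by (intro nn_integral_cong) auto
  ultimately show ?case using cong.IH by (auto intro!: sum.cong)
next
  case (set A)
  then show ?case using PS NS mix by (auto intro!: sum.cong)
next
  case (mult u c')
  have mP: "u \<in> borel_measurable P" using \<open>u \<in> borel_measurable M\<close> by (rule tP)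
  have mN: "\<And>k. k \<in> I \<Longrightarrow> u \<in> borel_measurable (N k)" using tN[OF _ \<open>u \<in> borel_measurable M\<close>] by auto
  have "(\<integral>\<^sup>+ x. c' * u x \<partial>P) = c' * (\<integral>\<^sup>+ x. u x \<partial>P)" using mP by (rule nn_integral_cmult)
  also have "\<dots> = (\<Sum>k\<in>I. c' * (c k * (\<integral>\<^sup>+ x. u x \<partial>N k)))" using mult.IH by (simp add: sum_distrib_left)
  also have "\<dots> = (\<Sum>k\<in>I. c k * (\<integral>\<^sup>+ x. c' * u x \<partial>N k))"
    using mN by (intro sum.cong) (auto simp: nn_integral_cmult mult.left_commute)
  finally show ?case .
next
  case (add u v)
  have mP: "u \<in> borel_measurable P" "v \<in> borel_measurable P" using tP[OF \<open>u \<in> borel_measurable M\<close>] tP[OF \<open>v \<in> borel_measurable M\<close>] by auto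
  have mN: "\<And>k. k \<in> I \<Longrightarrow> u \<in> borel_measurable (N k) \<and> v \<in> borel_measurable (N k)"
    using tN[OF _ \<open>u \<in> borel_measurable M\<close>] tN[OF _ \<open>v \<in> borel_measurable M\<close>] by auto
  have "(\<integral>\<^sup>+ x. v x + u x \<partial>P) = (\<integral>\<^sup>+ x. v x \<partial>P) + (\<integral>\<^sup>+ x. u x \<partial>P)" using mP by (intro nn_integral_add) auto
  also have "\<dots> = (\<Sum>k\<in>I. c k * (\<integral>\<^sup>+ x. v x \<partial>N k) + c k * (\<integral>\<^sup>+ x. u x \<partial>N k))"
    using add.IH by (simp add: sum.distrib)
  also have "\<dots> = (\<Sum>k\<in>I. c k * (\<integral>\<^sup>+ x. v x + u x \<partial>N k))"
    using mN by (intro sum.cong) (auto simp: nn_integral_add distrib_left)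
  finally show ?case .
next
  case (seq U)
  have mP: "U i \<in> borel_measurable P" for i by (rule tP) (use seq in blast)
  have mN: "\<And>i k. k \<in> I \<Longrightarrow> U i \<in> borel_measurable (N k)"
    by (rule tN) (use seq in blast)+
  have "(\<integral>\<^sup>+ x. (SUP i. U i) x \<partial>P) = (\<integral>\<^sup>+ x. (SUP i. U i x) \<partial>P)" by (simp add: image_comp)
  also have "\<dots> = (SUP i. \<integral>\<^sup>+ x. U i x \<partial>P)" using \<open>incseq U\<close> mP by (intro nn_integral_monotone_convergence_SUP) auto
  also have "\<dots> = (SUP i. \<Sum>k\<in>I. c k * (\<integral>\<^sup>+ x. U i x \<partial>N k))" using seq.IH by simp
  also have "\<dots> = (\<Sum>k\<in>I. SUP i. c k * (\<integral>\<^sup>+ x. U i x \<partial>N k))"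
  proof (rule ennreal_SUP_sum)
    fix k assume "k \<in> I"
    show "incseq (\<lambda>i. c k * (\<integral>\<^sup>+ x. U i x \<partial>N k))"
      using \<open>incseq U\<close> by (auto simp: incseq_def le_fun_def intro!: mult_left_mono nn_integral_mono)
  qed
  also have "\<dots> = (\<Sum>k\<in>I. c k * (SUP i. (\<integral>\<^sup>+ x. U i x \<partial>N k)))"
    by (simp add: SUP_mult_left_ennreal)
  also have "\<dots> = (\<Sum>k\<in>I. c k * (\<integral>\<^sup>+ x. (SUP i. U i) x \<partial>N k))"
  proof (intro sum.cong refl arg_cong2[where f="(*)"])
    fix k assume "k \<in> I"
    then show "(SUP i. (\<integral>\<^sup>+ x. U i x \<partial>N k)) = (\<integral>\<^sup>+ x. (SUP i. U i) x \<partial>N k)"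
    proof -
      have "(\<integral>\<^sup>+ x. (SUP i. U i) x \<partial>N k) = (\<integral>\<^sup>+ x. (SUP i. U i x) \<partial>N k)" by (simp add: image_comp)
      also have "\<dots> = (SUP i. (\<integral>\<^sup>+ x. U i x \<partial>N k))"
        using \<open>incseq U\<close> mN \<open>k \<in> I\<close> by (intro nn_integral_monotone_convergence_SUP) auto
      finally show ?thesis by simp
    qed
  qed
  finally show ?case .
qed
qed



lemma meas_tv:
  fixes a b :: "'x \<Rightarrow> 'y::finite \<Rightarrow> real"
  assumes [measurable]: "\<And>y. (\<lambda>x. a x y) \<in> borel_measurable M" "\<And>y. (\<lambda>x. b x y) \<in> borel_measurable M"
  shows "(\<lambda>x. ennreal (tv_dagger (a x) (b x))) \<in> borel_measurable M"
  unfolding tv_dagger_def tv_dist_def by measurable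

lemma meas_kl:
  fixes a b :: "'x \<Rightarrow> 'y::finite \<Rightarrow> real"
  assumes [measurable]: "\<And>y. (\<lambda>x. a x y) \<in> borel_measurable M" "\<And>y. (\<lambda>x. b x y) \<in> borel_measurable M"
  shows "(\<lambda>x. kl_div (a x) (b x)) \<in> borel_measurable M"
  unfolding kl_div_def by measurable

theorem proposition1:
  fixes M :: "'x measure" and Pk :: "nat \<Rightarrow> 'x measure" and P :: "'x measure"
    and D :: "nat \<Rightarrow> 'x set" and q :: "nat \<Rightarrow> real" and K :: nat
    and Phi_star :: "'x \<Rightarrow> 'y::finite \<Rightarrow> real"
    and Phi_glob :: "'x \<Rightarrow> 'y \<Rightarrow> real"
    and Phi_loc :: "nat \<Rightarrow> 'x \<Rightarrow> 'y \<Rightarrow> real"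
  assumes K: "K \<ge> 1"
    and D_meas: "\<And>k. k \<in> {1..K} \<Longrightarrow> D k \<in> sets M"
    and D_disj: "\<And>k j. k \<in> {1..K} \<Longrightarrow> j \<in> {1..K} \<Longrightarrow> k \<noteq> j \<Longrightarrow> D k \<inter> D j = {}"
    and Pk_prob: "\<And>k. k \<in> {1..K} \<Longrightarrow> prob_space (Pk k)"
    and Pk_sets: "\<And>k. k \<in> {1..K} \<Longrightarrow> sets (Pk k) = sets M"
    and Pk_D: "\<And>k. k \<in> {1..K} \<Longrightarrow> emeasure (Pk k) (D k) = 1"
    and q_nonneg: "\<And>k. k \<in> {1..K} \<Longrightarrow> q k \<ge> 0"
    and q_sum: "(\<Sum>k=1..K. q k) = 1"
    and P_sets: "sets P = sets M"
    and P_mix: "\<And>A. A \<in> sets M \<Longrightarrow> emeasure P A = (\<Sum>k=1..K. ennreal (q k) * emeasure (Pk k) A)"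
    and star_meas: "\<And>y. (\<lambda>x. Phi_star x y) \<in> borel_measurable M"
    and star_simplex: "\<And>x. x \<in> space M \<Longrightarrow> Phi_star x \<in> prob_simplex"
    and glob_meas: "\<And>y. (\<lambda>x. Phi_glob x y) \<in> borel_measurable M"
    and glob_simplex: "\<And>x. x \<in> space M \<Longrightarrow> Phi_glob x \<in> prob_simplex"
    and loc_meas: "\<And>k y. k \<in> {1..K} \<Longrightarrow> (\<lambda>x. Phi_loc k x y) \<in> borel_measurable M"
    and loc_simplex: "\<And>k x. k \<in> {1..K} \<Longrightarrow> x \<in> space M \<Longrightarrow> Phi_loc k x \<in> prob_simplex"
  shows "(\<integral>\<^sup>+ x. ennreal (tv_dagger (Phi_star x) (Phi_glob x)) \<partial>P)
    \<le> (\<Sum>k=1..K. ennreal (q k) * (\<integral>\<^sup>+ x\<in>D k. kl_div (Phi_star x) (Phi_loc k x) \<partial>Pk k))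
     + (\<Sum>k=1..K. ennreal (q k) * (\<integral>\<^sup>+ x\<in>D k. kl_div (Phi_loc k x) (Phi_glob x) \<partial>Pk k))"
  proof -
  define f where "f x = ennreal (tv_dagger (Phi_star x) (Phi_glob x))" for x
  define g1 where "g1 k x = kl_div (Phi_star x) (Phi_loc k x)" for k x
  define g2 where "g2 k x = kl_div (Phi_loc k x) (Phi_glob x)" for k x
  have fm: "f \<in> borel_measurable M" unfolding f_def by (rule meas_tv[OF star_meas glob_meas])
  have "(\<integral>\<^sup>+ x. f x \<partial>P) = (\<Sum>k=1..K. ennreal (q k) * (\<integral>\<^sup>+ x. f x \<partial>Pk k))"
    by (rule mix_integral[OF _ P_sets Pk_sets P_mix fm]) auto
  also have "\<dots> \<le> (\<Sum>k=1..K. ennreal (q k) * ((\<integral>\<^sup>+ x\<in>D k. g1 k x \<partial>Pk k) + (\<integral>\<^sup>+ x\<in>D k. g2 k x \<partial>Pk k)))"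
  proof (intro sum_mono mult_left_mono)
    fix k assume k: "k \<in> {1..K}"
    interpret Pk: prob_space "Pk k" using Pk_prob[OF k] .
    have sP: "space (Pk k) = space M" using Pk_sets[OF k] by (rule sets_eq_imp_space_eq)
    have tN: "\<And>h. h \<in> borel_measurable M \<Longrightarrow> h \<in> (borel_measurable (Pk k) :: ('x \<Rightarrow> ennreal) set)"
      using measurable_cong_sets[OF Pk_sets[OF k] refl, of "borel :: ennreal measure"] by simp
    have "Pk.prob (D k) = 1" using Pk_D[OF k] by (simp add: Pk.emeasure_eq_measure)
    then have AE: "AE x in Pk k. x \<in> D k" by (rule Pk.AE_prob_1)
    have "AE x in Pk k. f x = f x * indicator (D k) x"
      using AE by eventually_elim (simp add: indicator_def)
    then have "(\<integral>\<^sup>+ x. f x \<partial>Pk k) = (\<integral>\<^sup>+ x. f x * indicator (D k) x \<partial>Pk k)"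
      by (rule nn_integral_cong_AE)
    also have "\<dots> \<le> (\<integral>\<^sup>+ x. (g1 k x + g2 k x) * indicator (D k) x \<partial>Pk k)"
    proof (rule nn_integral_mono)
      fix x assume "x \<in> space (Pk k)"
      then have x: "x \<in> space M" using sP by simp
      have "f x \<le> g1 k x + g2 k x" unfolding f_def g1_def g2_def
        by (rule pointwise[OF star_simplex[OF x] glob_simplex[OF x] loc_simplex[OF k x]])
      then show "f x * indicator (D k) x \<le> (g1 k x + g2 k x) * indicator (D k) x"
        by (rule mult_right_mono) simp
    qed
    also have "\<dots> = (\<integral>\<^sup>+ x. g1 k x * indicator (D k) x + g2 k x * indicator (D k) x \<partial>Pk k)"
      by (simp add: distrib_right)
    also have "\<dots> = (\<integral>\<^sup>+ x\<in>D k. g1 k x \<partial>Pk k) + (\<integral>\<^sup>+ x\<in>D k. g2 k x \<partial>Pk k)"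
    proof (rule nn_integral_add)
      have [measurable]: "D k \<in> sets M" using D_meas[OF k] .
      have [measurable]: "g1 k \<in> borel_measurable M" unfolding g1_def by (rule meas_kl[OF star_meas loc_meas[OF k]])
      have [measurable]: "g2 k \<in> borel_measurable M" unfolding g2_def by (rule meas_kl[OF loc_meas[OF k] glob_meas])
      have "(\<lambda>x. g1 k x * indicator (D k) x) \<in> borel_measurable M" by measurable
      then show "(\<lambda>x. g1 k x * indicator (D k) x) \<in> borel_measurable (Pk k)" by (rule tN)
      have "(\<lambda>x. g2 k x * indicator (D k) x) \<in> borel_measurable M" by measurable
      then show "(\<lambda>x. g2 k x * indicator (D k) x) \<in> borel_measurable (Pk k)" by (rule tN)
    qed
    finally show "(\<integral>\<^sup>+ x. f x \<partial>Pk k) \<le> (\<integral>\<^sup>+ x\<in>D k. g1 k x \<partial>Pk k) + (\<integral>\<^sup>+ x\<in>D k. g2 k x \<partial>Pk k)" .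
  qed simp
  also have "\<dots> = (\<Sum>k=1..K. ennreal (q k) * (\<integral>\<^sup>+ x\<in>D k. g1 k x \<partial>Pk k))
     + (\<Sum>k=1..K. ennreal (q k) * (\<integral>\<^sup>+ x\<in>D k. g2 k x \<partial>Pk k))"
    by (simp add: distrib_left sum.distrib)
  finally show ?thesis unfolding f_def g1_def g2_def .
qed

end
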